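(* Let $A,W\in\mathbb R^{d\times d}$ be symmetric positive definite and $c\in\mathbb R^d$; let $\mathcal X=\{x:\|x\|_A\le1\}$, $\Theta=\{\theta:\|\theta-c\|_W\le1\}$. Let $U$ be an orthogonal matrix with $A^{1/2}WA^{1/2}=U\Lambda U^\top$, $\Lambda=\mathrm{diag}(\lambda_1,\dots,\lambda_d)$, and let $b=U^\top A^{-1/2}c$. Let $F(y)=-\sum_{i=1}^d\sqrt{y_i}\,|b_i|-\sqrt{\sum_{i=1}^d\lambda_i^{-1}y_i}$ and consider the problem $P_C$: minimize $F(y)$ over $y\in\Delta_{d-1}$. Given $y\in\Delta_{d-1}$, define $u_i=\sqrt{y_i}\,\mathrm{sign}(b_i)$ for $i\in[d]$, $x=A^{-1/2}Uu$ and $\theta^\star=c+W^{-1}x/\|x\|_{W^{-1}}$. Then $(x,\theta^\star)\in\mathcal X\times\Theta$, and for any $\varepsilon>0$, $y$ is an $\varepsilon$-solution to $P_C$ if and only if $(x,\theta^\star)$ is an $\varepsilon$-solution to $P_B$.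
   Context: $\|z\|_M=\sqrt{z^\top Mz}$. $\Delta_{d-1}=\{y\in\mathbb R^d:y_i\ge0,\sum_iy_i=1\}$. Convention $\mathrm{sign}(0)=1$. $P_B$: maximize $x^\top\theta$ over $(x,\theta)\in\mathcal X\times\Theta$. An $\varepsilon$-solution to $P_B$ is a pair $(x,\theta)\in\mathcal X\times\Theta$ with $x^\top\theta\ge\sup_{\mathcal X\times\Theta}x'^\top\theta'-\varepsilon$; an $\varepsilon$-solution to $P_C$ is $y\in\Delta_{d-1}$ with $F(y)\le\min_{\Delta_{d-1}}F+\varepsilon$. *)

theory Defs
  imports "HOL-Analysis.Analysis"
begin

definition Mnorm :: "real^'n^'n \<Rightarrow> real^'n \<Rightarrow> real" where
  "Mnorm M z = sqrt (z \<bullet> (M *v z))"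

definition sym_pd :: "real^'n^'n \<Rightarrow> bool" where
  "sym_pd M \<longleftrightarrow> transpose M = M \<and> (\<forall>z. z \<noteq> 0 \<longrightarrow> z \<bullet> (M *v z) > 0)"

definition diagm :: "real^'n \<Rightarrow> real^'n^'n" where
  "diagm l = (\<chi> i j. if i = j then l $ i else 0)"

definition prob_simplex :: "(real^'n) set" where
  "prob_simplex = {y. (\<forall>i. y $ i \<ge> 0) \<and> sum (\<lambda>i. y $ i) UNIV = 1}"

definition sgn1 :: "real \<Rightarrow> real" where
  "sgn1 t = (if t \<ge> 0 then 1 else -1)"

definition eps_sol_B :: "(real^'n) set \<Rightarrow> (real^'n) set \<Rightarrow> real^'n \<Rightarrow> real^'n \<Rightarrow> real \<Rightarrow> bool" where
  "eps_sol_B X T x \<theta> \<epsilon> \<longleftrightarrow> x \<in> X \<and> \<theta> \<in> T \<and>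
     x \<bullet> \<theta> \<ge> (SUP p\<in>X \<times> T. fst p \<bullet> snd p) - \<epsilon>"

definition eps_sol_C :: "(real^'n \<Rightarrow> real) \<Rightarrow> real^'n \<Rightarrow> real \<Rightarrow> bool" where
  "eps_sol_C F y \<epsilon> \<longleftrightarrow> y \<in> prob_simplex \<and> F y \<le> (INF y'\<in>prob_simplex. F y') + \<epsilon>"

end

theory Submission
  imports Defs
begin

lemma inner_mv2: "inner ((M::real^'n^'m) *v x) y = inner x (transpose M *v y)"
  by (metis dot_lmul_matrix inner_commute transpose_matrix_vector)

lemma pd_invertible:
  fixes M :: "real^'n^'n"
  assumes "sym_pd M" shows "invertible M"
proof -
  have "\<forall>x. M *v x = 0 \<longrightarrow> x = 0"
    using assms unfolding sym_pd_def by (metis inner_zero_right less_irrefl)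
  then show ?thesis using matrix_left_invertible_ker invertible_left_inverse by blast
qed

lemma pd_inv:
  fixes M :: "real^'n^'n"
  assumes "sym_pd M"
  shows "M ** matrix_inv M = mat 1" "matrix_inv M ** M = mat 1"
proof -
  have "\<exists>A'. M ** A' = mat 1 \<and> A' ** M = mat 1"
    using pd_invertible[OF assms] unfolding invertible_def by blast
  then have "M ** matrix_inv M = mat 1 \<and> matrix_inv M ** M = mat 1"
    unfolding matrix_inv_def by (rule someI_ex)
  then show "M ** matrix_inv M = mat 1" "matrix_inv M ** M = mat 1" by auto
qed

lemma pd_inv_sym:
  fixes M :: "real^'n^'n"
  assumes "sym_pd M"
  shows "transpose (matrix_inv M) = matrix_inv M"
proof -
  have T: "transpose M = M" using assms sym_pd_def by blast
  have "transpose (matrix_inv M) ** M = mat 1"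
    using pd_inv(1)[OF assms] matrix_transpose_mul[of M "matrix_inv M"] T by simp
  have "transpose (matrix_inv M) = transpose (matrix_inv M) ** (M ** matrix_inv M)"
    using pd_inv(1)[OF assms] by simp
  also have "\<dots> = (transpose (matrix_inv M) ** M) ** matrix_inv M"
    by (simp add: matrix_mul_assoc)
  finally show ?thesis using \<open>transpose (matrix_inv M) ** M = mat 1\<close> by simp
qed

lemma pd_inv_pd:
  fixes M :: "real^'n^'n"
  assumes "sym_pd M"
  shows "sym_pd (matrix_inv M)"
  unfolding sym_pd_def
proof (intro conjI allI impI)
  show "transpose (matrix_inv M) = matrix_inv M" by (rule pd_inv_sym[OF assms])
  fix z :: "real^'n" assume z: "z \<noteq> 0"
  let ?w = "matrix_inv M *v z"
  have Mw: "M *v ?w = z" using pd_inv(1)[OF assms] by (simp add: matrix_vector_mul_assoc)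
  then have "?w \<noteq> 0" using z by auto
  then have "?w \<bullet> (M *v ?w) > 0" using assms sym_pd_def by blast
  then show "z \<bullet> (matrix_inv M *v z) > 0" using Mw by (simp add: inner_commute)
qed

lemma pd_nonneg:
  fixes M :: "real^'n^'n"
  assumes "sym_pd M" shows "z \<bullet> (M *v z) \<ge> 0"
  using assms unfolding sym_pd_def by (cases "z = 0") (auto intro: less_imp_le)

lemma pd_cs:
  fixes M :: "real^'n^'n"
  assumes "sym_pd M"
  shows "(a \<bullet> (M *v d))^2 \<le> (a \<bullet> (M *v a)) * (d \<bullet> (M *v d))"
proof (cases "d = 0")
  case True then show ?thesis by simp
next
  case False
  have T: "transpose M = M" using assms sym_pd_def by blast
  have qd: "d \<bullet> (M *v d) > 0" using False assms sym_pd_def by blast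
  have sym: "d \<bullet> (M *v a) = a \<bullet> (M *v d)"
    using inner_mv2[of M d a] T by (simp add: inner_commute)
  define t where "t = - (a \<bullet> (M *v d)) / (d \<bullet> (M *v d))"
  have "0 \<le> (a + t *\<^sub>R d) \<bullet> (M *v (a + t *\<^sub>R d))" by (rule pd_nonneg[OF assms])
  also have "\<dots> = a \<bullet> (M *v a) + 2 * t * (a \<bullet> (M *v d)) + t^2 * (d \<bullet> (M *v d))"
    by (simp add: matrix_vector_right_distrib matrix_vector_mult_scaleR inner_add_left inner_add_right sym power2_eq_square algebra_simps)
  also have "\<dots> = a \<bullet> (M *v a) - (a \<bullet> (M *v d))^2 / (d \<bullet> (M *v d))"
    using qd unfolding t_def by (simp add: field_simps power2_eq_square)
  finally have "(a \<bullet> (M *v d))^2 / (d \<bullet> (M *v d)) \<le> a \<bullet> (M *v a)" by simp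
  then show ?thesis using qd by (simp add: divide_le_eq mult.commute)
qed

declare transpose_matrix_vector[simp del]

theorem theorem2:
  fixes A W S U :: "real^'n^'n" and c lam y b u x \<theta>s :: "real^'n"
    and X \<Theta> :: "(real^'n) set" and F :: "real^'n \<Rightarrow> real"
  assumes A_pd: "sym_pd A" and W_pd: "sym_pd W"
    and S_sqrt: "sym_pd S" "S ** S = A"
    and U_orth: "orthogonal_matrix U"
    and eig: "S ** W ** S = U ** diagm lam ** transpose U"
    and X_def: "X = {x'. Mnorm A x' \<le> 1}"
    and \<Theta>_def: "\<Theta> = {\<theta>. Mnorm W (\<theta> - c) \<le> 1}"
    and b_def: "b = transpose U *v (matrix_inv S *v c)"
    and F_def: "F = (\<lambda>y'. - (\<Sum>i\<in>UNIV. sqrt (y' $ i) * \<bar>b $ i\<bar>)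
                          - sqrt (\<Sum>i\<in>UNIV. y' $ i / lam $ i))"
    and y_simp: "y \<in> prob_simplex"
    and u_def: "u = (\<chi> i. sqrt (y $ i) * sgn1 (b $ i))"
    and x_def: "x = matrix_inv S *v (U *v u)"
    and \<theta>s_def: "\<theta>s = c + (1 / Mnorm (matrix_inv W) x) *\<^sub>R (matrix_inv W *v x)"
  shows "x \<in> X \<and> \<theta>s \<in> \<Theta> \<and>
         (\<forall>\<epsilon>>0. eps_sol_C F y \<epsilon> \<longleftrightarrow> eps_sol_B X \<Theta> x \<theta>s \<epsilon>)"
proof -
  define Si where "Si = matrix_inv S"
  define Wi where "Wi = matrix_inv W"
  have ST: "transpose S = S" using S_sqrt(1) sym_pd_def by blast
  have WT: "transpose W = W" using W_pd sym_pd_def by blast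
  have SSi: "S ** Si = mat 1" and SiS: "Si ** S = mat 1" using pd_inv[OF S_sqrt(1)] Si_def by auto
  have WWi: "W ** Wi = mat 1" and WiW: "Wi ** W = mat 1" using pd_inv[OF W_pd] Wi_def by auto
  have SiT: "transpose Si = Si" using pd_inv_sym[OF S_sqrt(1)] Si_def by simp
  have WiT: "transpose Wi = Wi" using pd_inv_sym[OF W_pd] Wi_def by simp
  have Wi_pd: "sym_pd Wi" using pd_inv_pd[OF W_pd] Wi_def by simp
  have UtU: "transpose U ** U = mat 1" and UUt: "U ** transpose U = mat 1"
    using U_orth orthogonal_matrix_def by auto
  have SSi': "S ** (Si ** Z) = Z" for Z using SSi by (simp add: matrix_mul_assoc)
  have SiS': "Si ** (S ** Z) = Z" for Z using SiS by (simp add: matrix_mul_assoc)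
  have WWi': "W ** (Wi ** Z) = Z" for Z using WWi by (simp add: matrix_mul_assoc)
  have WiW': "Wi ** (W ** Z) = Z" for Z using WiW by (simp add: matrix_mul_assoc)
  have UtU': "transpose U ** (U ** Z) = Z" for Z using UtU by (simp add: matrix_mul_assoc)
  have UUt': "U ** (transpose U ** Z) = Z" for Z using UUt by (simp add: matrix_mul_assoc)
  have SSiv: "S *v (Si *v w) = w" for w using SSi by (simp add: matrix_vector_mul_assoc)
  have SiSv: "Si *v (S *v w) = w" for w using SiS by (simp add: matrix_vector_mul_assoc)
  have WWiv: "W *v (Wi *v w) = w" for w using WWi by (simp add: matrix_vector_mul_assoc)
  have UtUv: "transpose U *v (U *v w) = w" for w using UtU by (simp add: matrix_vector_mul_assoc)
  have UUtv: "U *v (transpose U *v w) = w" for w using UUt by (simp add: matrix_vector_mul_assoc)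
  have Av: "A *v w = S *v (S *v w)" for w using S_sqrt(2) by (simp add: matrix_vector_mul_assoc)
  define M where "M = transpose U ** Si ** Wi ** Si ** U"
  have D: "diagm lam = transpose U ** (S ** W ** S) ** U"
    using eig by (simp add: matrix_mul_assoc[symmetric] UtU' UtU)
  have MD: "M ** diagm lam = mat 1"
    unfolding D M_def by (simp add: matrix_mul_assoc[symmetric] UtU' UtU UUt' SSi' SiS' WWi' WiW')
  have MDij: "(M ** diagm lam) $ i $ j = M $ i $ j * lam $ j" for i j
    by (simp add: matrix_matrix_mult_def diagm_def if_distrib[of "(*) _"] cong: if_cong)
  have Mlam: "M $ i $ j * lam $ j = (if i = j then 1 else 0)" for i j
    using MD MDij[of i j] by (simp add: mat_def)
  have lamnz: "lam $ j \<noteq> 0" for j using Mlam[of j j] by auto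
  have Mdiag: "M $ i $ j = (if i = j then 1 / lam $ j else 0)" for i j
    using Mlam[of i j] lamnz[of j] by (auto simp: field_simps)
  have quad: "(Si *v (U *v v)) \<bullet> (Wi *v (Si *v (U *v v))) = (\<Sum>i\<in>UNIV. (v $ i)^2 / lam $ i)" for v
  proof -
    have "(Si *v (U *v v)) \<bullet> (Wi *v (Si *v (U *v v)))
        = v \<bullet> (transpose U *v (Si *v (Wi *v (Si *v (U *v v)))))"
      by (simp add: inner_mv2 SiT)
    also have "\<dots> = v \<bullet> (M *v v)"
      by (simp add: M_def matrix_vector_mul_assoc matrix_mul_assoc)
    also have "\<dots> = (\<Sum>i\<in>UNIV. (v $ i)^2 / lam $ i)"
      by (simp add: inner_vec_def matrix_vector_mult_def Mdiag power2_eq_square if_distrib[of "\<lambda>t. t * _"] cong: if_cong)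
    finally show ?thesis .
  qed
  have normA: "(Si *v (U *v v)) \<bullet> (A *v (Si *v (U *v v))) = v \<bullet> v" for v
    by (simp add: Av SSiv inner_mv2 SiT SiSv UtUv)
  have linc: "(Si *v (U *v v)) \<bullet> c = v \<bullet> b" for v
    by (simp add: inner_mv2 SiT b_def Si_def[symmetric])
  have recon: "x' = Si *v (U *v (transpose U *v (S *v x')))" for x'
    by (simp add: UUtv SiSv)
  have normA2: "(transpose U *v (S *v x')) \<bullet> (transpose U *v (S *v x')) = x' \<bullet> (A *v x')" for x'
    by (simp add: inner_mv2 UUtv ST Av)
  have Fy: "F y' = - (\<Sum>i\<in>UNIV. sqrt (y' $ i) * \<bar>b $ i\<bar>) - sqrt (\<Sum>i\<in>UNIV. y' $ i / lam $ i)" for y'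
    by (simp add: F_def)
  have partA: "Si *v (U *v (\<chi> i. sqrt (y' $ i) * sgn1 (b $ i))) \<in> X \<and>
      c + (1 / Mnorm Wi (Si *v (U *v (\<chi> i. sqrt (y' $ i) * sgn1 (b $ i))))) *\<^sub>R
            (Wi *v (Si *v (U *v (\<chi> i. sqrt (y' $ i) * sgn1 (b $ i))))) \<in> \<Theta> \<and>
      (Si *v (U *v (\<chi> i. sqrt (y' $ i) * sgn1 (b $ i)))) \<bullet>
      (c + (1 / Mnorm Wi (Si *v (U *v (\<chi> i. sqrt (y' $ i) * sgn1 (b $ i))))) *\<^sub>R
            (Wi *v (Si *v (U *v (\<chi> i. sqrt (y' $ i) * sgn1 (b $ i)))))) = - F y'"
    if ys: "y' \<in> prob_simplex" for y'
  proof -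
    define v where "v = (\<chi> i. sqrt (y' $ i) * sgn1 (b $ i))"
    define z where "z = Si *v (U *v v)"
    define q where "q = z \<bullet> (Wi *v z)"
    have y0: "\<And>i. y' $ i \<ge> 0" and y1: "(\<Sum>i\<in>UNIV. y' $ i) = 1"
      using ys unfolding prob_simplex_def by auto
    have vi2: "(v $ i)^2 = y' $ i" for i
      using y0[of i] by (simp add: v_def sgn1_def power_mult_distrib)
    have vv: "v \<bullet> v = 1"
      using vi2 y1 by (simp add: inner_vec_def power2_eq_square)
    have zA: "z \<bullet> (A *v z) = 1" using normA[of v] vv z_def by simp
    have zX: "z \<in> X" using zA X_def by (simp add: Mnorm_def)
    have "z \<noteq> 0" using zA by auto
    then have qpos: "q > 0" using Wi_pd unfolding sym_pd_def q_def by blast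
    have qeq: "q = (\<Sum>i\<in>UNIV. y' $ i / lam $ i)"
      using quad[of v] vi2 unfolding q_def z_def by simp
    define t where "t = 1 / sqrt q"
    have MW: "Mnorm Wi z = sqrt q" by (simp add: Mnorm_def q_def)
    have tq: "t^2 * q = 1" using qpos by (simp add: t_def power_divide)
    have "(t *\<^sub>R (Wi *v z)) \<bullet> (W *v (t *\<^sub>R (Wi *v z))) = t^2 * q"
      by (simp add: matrix_vector_mult_scaleR WWiv q_def inner_commute power2_eq_square)
    then have "Mnorm W (t *\<^sub>R (Wi *v z)) = 1" using tq by (simp add: Mnorm_def)
    then have thX: "c + t *\<^sub>R (Wi *v z) \<in> \<Theta>" using \<Theta>_def by simp
    have vb: "v \<bullet> b = (\<Sum>i\<in>UNIV. sqrt (y' $ i) * \<bar>b $ i\<bar>)"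
      unfolding inner_vec_def v_def
      by (intro sum.cong) (auto simp: sgn1_def abs_if)
    have "z \<bullet> (c + t *\<^sub>R (Wi *v z)) = v \<bullet> b + t * q"
      using linc[of v] by (simp add: inner_add_right z_def q_def)
    also have "t * q = sqrt q" using qpos by (simp add: t_def real_div_sqrt)
    finally have "z \<bullet> (c + t *\<^sub>R (Wi *v z)) = - F y'"
      using vb qeq by (simp add: Fy)
    then show ?thesis using zX thX MW unfolding z_def v_def t_def by simp
  qed
  have Fneg: "- F y' \<ge> 0" if "y' \<in> prob_simplex" for y'
  proof -
    have "\<forall>i. y' $ i \<ge> 0" using that prob_simplex_def by auto
    then have "(\<Sum>i\<in>UNIV. sqrt (y' $ i) * \<bar>b $ i\<bar>) \<ge> 0" by (intro sum_nonneg) simp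
    moreover
    define v where "v = (\<chi> i. sqrt (y' $ i))"
    have "(\<Sum>i\<in>UNIV. (v $ i)^2 / lam $ i) \<ge> 0"
      using quad[of v] pd_nonneg[OF Wi_pd] by metis
    then have "(\<Sum>i\<in>UNIV. y' $ i / lam $ i) \<ge> 0"
      using \<open>\<forall>i. y' $ i \<ge> 0\<close> by (simp add: v_def)
    ultimately show ?thesis by (simp add: Fy)
  qed
  have partB: "\<exists>y'\<in>prob_simplex. x' \<bullet> \<theta>' \<le> - F y'" if xX: "x' \<in> X" and tT: "\<theta>' \<in> \<Theta>" for x' \<theta>'
  proof -
    define v where "v = transpose U *v (S *v x')"
    have xr: "x' = Si *v (U *v v)" using recon v_def by simp
    have "sqrt (x' \<bullet> (A *v x')) \<le> 1" using xX X_def by (simp add: Mnorm_def)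
    then have vv: "v \<bullet> v \<le> 1" using normA2[of x'] v_def by simp
    define Q where "Q = (\<Sum>i\<in>UNIV. (v $ i)^2 / lam $ i)"
    have Qeq: "x' \<bullet> (Wi *v x') = Q" using quad[of v] xr Q_def by simp
    have Q0: "Q \<ge> 0" using pd_nonneg[OF Wi_pd, of x'] Qeq by simp
    define d where "d = \<theta>' - c"
    have "sqrt (d \<bullet> (W *v d)) \<le> 1" using tT \<Theta>_def d_def by (simp add: Mnorm_def)
    then have d1: "d \<bullet> (W *v d) \<le> 1" by simp
    have e1: "(Wi *v x') \<bullet> (W *v d) = x' \<bullet> d"
      using inner_mv2[of "transpose W" "Wi *v x'" d] WT WWiv by simp
    have e2: "(Wi *v x') \<bullet> (W *v (Wi *v x')) = Q"
      using Qeq WWiv by (simp add: inner_commute)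
    have "(x' \<bullet> d)^2 \<le> Q * (d \<bullet> (W *v d))"
      using pd_cs[OF W_pd, of "Wi *v x'" d] e1 e2 by simp
    also have "\<dots> \<le> Q" using Q0 d1 pd_nonneg[OF W_pd, of d] by (simp add: mult_left_le)
    finally have "(x' \<bullet> d)^2 \<le> Q" .
    then have xd: "x' \<bullet> d \<le> sqrt Q" using real_le_rsqrt by blast
    have xc: "x' \<bullet> c = v \<bullet> b" using linc[of v] xr by simp
    have main: "x' \<bullet> \<theta>' \<le> v \<bullet> b + sqrt Q"
      using xd xc unfolding d_def by (simp add: inner_diff_right)
    show ?thesis
    proof (cases "v = 0")
      case True
      then have "x' \<bullet> \<theta>' \<le> 0" using main Q_def by simp
      then show ?thesis using Fneg[OF y_simp] y_simp by force
    next
      case False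
      define n where "n = sqrt (v \<bullet> v)"
      have vvpos: "v \<bullet> v > 0" using False by simp
      have npos: "n > 0" and n1: "n \<le> 1" using vvpos vv by (auto simp: n_def)
      have n2: "n^2 = v \<bullet> v" using vvpos by (simp add: n_def)
      have vvsum: "v \<bullet> v = (\<Sum>i\<in>UNIV. (v $ i)^2)" by (simp add: inner_vec_def power2_eq_square)
      define y' where "y' = (\<chi> i. (v $ i / n)^2)"
      have "(\<Sum>i\<in>UNIV. y' $ i) = (\<Sum>i\<in>UNIV. (v $ i)^2) / n^2"
        by (simp add: y'_def power_divide sum_divide_distrib)
      also have "\<dots> = 1" using n2 vvsum vvpos by simp
      finally have ys: "y' \<in> prob_simplex" by (simp add: prob_simplex_def y'_def)
      have s1: "(\<Sum>i\<in>UNIV. sqrt (y' $ i) * \<bar>b $ i\<bar>) = (\<Sum>i\<in>UNIV. \<bar>v $ i\<bar> / n * \<bar>b $ i\<bar>)"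
        using npos by (simp add: y'_def abs_div)
      have s2: "(\<Sum>i\<in>UNIV. y' $ i / lam $ i) = Q / n^2"
        by (simp add: y'_def Q_def power_divide sum_divide_distrib mult.commute)
      have "v \<bullet> b \<le> (\<Sum>i\<in>UNIV. \<bar>v $ i\<bar> / n * \<bar>b $ i\<bar>)"
        unfolding inner_vec_def
      proof (rule sum_mono)
        fix i
        have "\<bar>v $ i\<bar> \<le> \<bar>v $ i\<bar> / n" using npos n1
          by (simp add: le_divide_eq mult_left_le)
        then have "\<bar>v $ i\<bar> * \<bar>b $ i\<bar> \<le> \<bar>v $ i\<bar> / n * \<bar>b $ i\<bar>"
          using mult_right_mono[of "\<bar>v $ i\<bar>" "\<bar>v $ i\<bar> / n" "\<bar>b $ i\<bar>"] by simp
        moreover have "v $ i \<bullet> b $ i \<le> \<bar>v $ i\<bar> * \<bar>b $ i\<bar>"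
          by (simp add: abs_mult[symmetric])
        ultimately show "v $ i \<bullet> b $ i \<le> \<bar>v $ i\<bar> / n * \<bar>b $ i\<bar>" by linarith
      qed
      moreover have sq: "sqrt Q \<le> sqrt (Q / n^2)"
      proof -
        have "n^2 \<le> 1" using npos n1 by (simp add: power_le_one)
        then have "Q * n^2 \<le> Q" using Q0 by (simp add: mult_left_le)
        then have "Q \<le> Q / n^2" using npos by (simp add: le_divide_eq)
        then show ?thesis by simp
      qed
      ultimately have "x' \<bullet> \<theta>' \<le> - F y'" using main sq unfolding Fy s1 s2 by linarith
      then show ?thesis using ys by blast
    qed
  qed
  define K where "K = (\<Sum>i\<in>UNIV. \<bar>b $ i\<bar>) + sqrt (\<Sum>i\<in>UNIV. \<bar>1 / lam $ i\<bar>)"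
  have Kb: "- F y' \<le> K" if ys: "y' \<in> prob_simplex" for y'
  proof -
    have y0: "\<And>i. y' $ i \<ge> 0" and y1: "(\<Sum>i\<in>UNIV. y' $ i) = 1"
      using ys unfolding prob_simplex_def by auto
    have yle: "y' $ i \<le> 1" for i
      using member_le_sum[of i UNIV "\<lambda>i. y' $ i"] y0 y1 by simp
    have "(\<Sum>i\<in>UNIV. sqrt (y' $ i) * \<bar>b $ i\<bar>) \<le> (\<Sum>i\<in>UNIV. \<bar>b $ i\<bar>)"
      using yle by (intro sum_mono) (simp add: mult_left_le_one_le y0)
    moreover have "(\<Sum>i\<in>UNIV. y' $ i / lam $ i) \<le> (\<Sum>i\<in>UNIV. \<bar>1 / lam $ i\<bar>)"
    proof (rule sum_mono)
      fix i
      have "y' $ i / lam $ i \<le> y' $ i * \<bar>1 / lam $ i\<bar>"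
        using y0[of i] mult_left_mono[of "1 / lam $ i" "\<bar>1 / lam $ i\<bar>" "y' $ i"] abs_ge_self[of "1 / lam $ i"] by simp
      also have "\<dots> \<le> \<bar>1 / lam $ i\<bar>" using yle[of i] by (simp add: divide_right_mono)
      finally show "y' $ i / lam $ i \<le> \<bar>1 / lam $ i\<bar>" .
    qed
    ultimately show ?thesis unfolding K_def Fy
      using real_sqrt_le_mono[of "\<Sum>i\<in>UNIV. y' $ i / lam $ i" "\<Sum>i\<in>UNIV. \<bar>1 / lam $ i\<bar>"] by linarith
  qed
  have xe: "x = Si *v (U *v (\<chi> i. sqrt (y $ i) * sgn1 (b $ i)))"
    using x_def u_def Si_def by simp
  have te: "\<theta>s = c + (1 / Mnorm Wi x) *\<^sub>R (Wi *v x)"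
    using \<theta>s_def Wi_def by simp
  have xX: "x \<in> X" and tT: "\<theta>s \<in> \<Theta>" and xt: "x \<bullet> \<theta>s = - F y"
    using partA[OF y_simp] unfolding xe[symmetric] te by auto
  define f where "f = (\<lambda>p::(real^'n) \<times> (real^'n). fst p \<bullet> snd p)"
  have neV: "X \<times> \<Theta> \<noteq> {}" using xX tT by blast
  have neS: "(prob_simplex :: (real^'n) set) \<noteq> {}" using y_simp by blast
  have bddV: "bdd_above (f ` (X \<times> \<Theta>))"
  proof (rule bdd_aboveI)
    fix r assume "r \<in> f ` (X \<times> \<Theta>)"
    then obtain p where p: "p \<in> X \<times> \<Theta>" "r = f p" by (rule imageE)
    obtain x' \<theta>' where pe: "p = (x', \<theta>')" by (cases p)
    have h: "x' \<in> X" "\<theta>' \<in> \<Theta>" "r = f (x', \<theta>')" using p pe by simp_all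
    obtain y' where ys: "y' \<in> prob_simplex" and le: "x' \<bullet> \<theta>' \<le> - F y'"
      using partB[OF h(1,2)] by blast
    have "- F y' \<le> K" by (rule Kb[OF ys])
    moreover have "r = x' \<bullet> \<theta>'" using h(3) by (simp add: f_def)
    ultimately show "r \<le> K" using le by linarith
  qed
  have bddF: "bdd_below (F ` prob_simplex)"
  proof (rule bdd_belowI)
    fix r assume "r \<in> F ` prob_simplex"
    then obtain y' where ys: "y' \<in> prob_simplex" and "r = F y'" by (rule imageE)
    then show "- K \<le> r" using Kb[OF ys] by linarith
  qed
  have le1: "(SUP p\<in>X \<times> \<Theta>. f p) \<le> - (INF y'\<in>prob_simplex. F y')"
  proof (rule cSUP_least[OF neV])
    fix p assume "p \<in> X \<times> \<Theta>"
    moreover obtain x' \<theta>' where pe: "p = (x', \<theta>')" by (cases p)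
    ultimately have h: "x' \<in> X" "\<theta>' \<in> \<Theta>" "p = (x', \<theta>')" by simp_all
    obtain y' where ys: "y' \<in> prob_simplex" and le: "x' \<bullet> \<theta>' \<le> - F y'"
      using partB[OF h(1,2)] by blast
    have "f p = x' \<bullet> \<theta>'" using h(3) by (simp add: f_def)
    moreover have "(INF y'\<in>prob_simplex. F y') \<le> F y'" by (rule cINF_lower[OF bddF ys])
    ultimately show "f p \<le> - (INF y'\<in>prob_simplex. F y')" using le by linarith
  qed
  have le2: "- (SUP p\<in>X \<times> \<Theta>. f p) \<le> (INF y'\<in>prob_simplex. F y')"
  proof (rule cINF_greatest[OF neS])
    fix y' :: "real^'n" assume ys: "y' \<in> prob_simplex"
    let ?x = "Si *v (U *v (\<chi> i. sqrt (y' $ i) * sgn1 (b $ i)))"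
    let ?t = "c + (1 / Mnorm Wi ?x) *\<^sub>R (Wi *v ?x)"
    have A: "?x \<in> X \<and> ?t \<in> \<Theta> \<and> ?x \<bullet> ?t = - F y'" by (rule partA[OF ys])
    have mem: "(?x, ?t) \<in> X \<times> \<Theta>" using A by blast
    have fv: "f (?x, ?t) = - F y'" unfolding f_def fst_conv snd_conv using A by blast
    have "f (?x, ?t) \<le> (SUP p\<in>X \<times> \<Theta>. f p)" by (rule cSUP_upper[OF mem bddV])
    then have "- F y' \<le> (SUP p\<in>X \<times> \<Theta>. f p)" unfolding fv .
    then show "- (SUP p\<in>X \<times> \<Theta>. f p) \<le> F y'" by linarith
  qed
  have eqSI: "(SUP p\<in>X \<times> \<Theta>. fst p \<bullet> snd p) = - (INF y'\<in>prob_simplex. F y')"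
    using le1 le2 unfolding f_def by linarith
  have "eps_sol_C F y \<epsilon> \<longleftrightarrow> eps_sol_B X \<Theta> x \<theta>s \<epsilon>" for \<epsilon>
  proof -
    have "eps_sol_C F y \<epsilon> \<longleftrightarrow> F y \<le> (INF y'\<in>prob_simplex. F y') + \<epsilon>"
      unfolding eps_sol_C_def using y_simp by blast
    also have "\<dots> \<longleftrightarrow> x \<bullet> \<theta>s \<ge> - (INF y'\<in>prob_simplex. F y') - \<epsilon>"
      using xt by linarith
    also have "\<dots> \<longleftrightarrow> eps_sol_B X \<Theta> x \<theta>s \<epsilon>"
      unfolding eps_sol_B_def eqSI using xX tT by blast
    finally show ?thesis .
  qed
  then show ?thesis using xX tT by blast
qed

end
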